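(* Consider the three-level model described in the context, in which the first predator's prey selection is fixed (so that $\tilde X_t$ has a distribution not depending on $t$; call it $\tilde X$), and a second predator consumes first predators; let $\tilde Y$ denote the parasite burden of a first predator given that it has been consumed by the second predator. Then \[ \frac{\mathbb{E}(\tilde{Y}^{2})}{\mathbb{E}(\tilde{Y})} \geq \mathbb{E}(\tilde{Y}) + \frac{\mathbb{E}(\tilde{X}^{2})}{\mathbb{E}(\tilde{X})}. \]
   Context: Model. The parasite burden of a prey aged $t\ge 0$ is $X_t$, where $(X_t)_{t\ge0}$ is a non-decreasing integer-valued stochastic process with $X_0=0$ (all moments used are assumed finite and the relevant expectations positive). Prey ages have probability density $f_A$ on $[0,\infty)$. A (first) predator encounters random prey at the times of a non-homogeneous Poisson process with intensity $\phi$; a predator aged $t$ consumes an encountered prey aged $u$ with probability $p(u,t)$. Consumption times form a Poisson process with intensity $\psi(t)=\phi(t)\int_0^\infty p(u,t)f_A(u)\,du$. The age $\tilde A_t$ of a prey consumed by a predator aged $t$ has density $p(a,t)f_A(a)/\int_0^\infty p(u,t)f_A(u)\,du$, and $\tilde X_t=X_{\tilde A_t}$ ($\tilde A_t$ independent of $X$). Consumed prey transfer all their parasites, with independent contributions; the first predator's burden $Y_t$ at age $t$ ($Y_0=0$) is the sum over consumption times $s\le t$ of independent copies of $\tilde X_s$. Fixed prey selection means that for all $s<t$ the ratio $p(u,t)/p(u,s)$ does not depend on $u$, so the law of $\tilde A_t$, hence of $\tilde X_t$, does not depend on $t$. A second predator consumes first predators; the age of a first predator consumed by the second predator has probability density $f_{\tilde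 A}$ (the second predator's prey selection being fixed), and $\tilde Y=Y_{\tilde A}$ where $\tilde A\sim f_{\tilde A}$ is independent of the process $(Y_t)$. *)

theory Defs
  imports "HOL-Probability.Probability"
begin

text \<open>Number of consumption events of a Poisson process with mean measure L
  (Poisson(L); for L = 0 it is the point mass at 0).\<close>
definition poisson0 :: "real \<Rightarrow> nat pmf" where
  "poisson0 L = (if 0 < L then poisson_pmf L else return_pmf 0)"

primrec iid_sum :: "nat \<Rightarrow> nat pmf \<Rightarrow> nat pmf" where
  "iid_sum 0 X = return_pmf 0"
| "iid_sum (Suc n) X = bind_pmf (iid_sum n X) (\<lambda>s. map_pmf (\<lambda>x. s + x) X)"

definition cum_int :: "(real \<Rightarrow> real) \<Rightarrow> real \<Rightarrow> real" where
  "cum_int psi t = (\<integral>s\<in>{0..t}. psi s \<partial>lborel)"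

text \<open>Law of the first predator's burden Y_t: sum over the consumption times
  (Poisson process with intensity psi) of independent copies of X~ (law Xt).\<close>
definition Y_law :: "(real \<Rightarrow> real) \<Rightarrow> nat pmf \<Rightarrow> real \<Rightarrow> nat pmf" where
  "Y_law psi Xt t = bind_pmf (poisson0 (cum_int psi t)) (\<lambda>n. iid_sum n Xt)"

text \<open>Law of the age A~ of a first predator consumed by the second predator.\<close>
definition age_law :: "(real \<Rightarrow> real) \<Rightarrow> real measure" where
  "age_law fA = density lborel (\<lambda>a. ennreal (fA a) * indicator {0..} a)"

text \<open>Law of Y~ = Y_{A~}, with A~ independent of the process Y.\<close>
definition Ytilde_law :: "(real \<Rightarrow> real) \<Rightarrow> nat pmf \<Rightarrow> (real \<Rightarrow> real) \<Rightarrow> nat measure" where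
  "Ytilde_law psi Xt fA = age_law fA \<bind> (\<lambda>a. measure_pmf (Y_law psi Xt a))"

end

theory Submission
  imports Defs
begin


lemma nn_lin:
  fixes P :: "'a pmf" and f g :: "'a \<Rightarrow> real"
  assumes f0: "\<And>x. 0 \<le> f x" and g0: "\<And>x. 0 \<le> g x"
    and fa: "(\<integral>\<^sup>+x. ennreal (f x) \<partial>P) = ennreal a"
    and gb: "(\<integral>\<^sup>+x. ennreal (g x) \<partial>P) = ennreal b"
    and c: "0 \<le> c0" "0 \<le> c1" "0 \<le> c2" and ab: "0 \<le> a" "0 \<le> b"
  shows "(\<integral>\<^sup>+x. ennreal (c0 + c1 * f x + c2 * g x) \<partial>P) = ennreal (c0 + c1*a + c2*b)"
proof -
  have "(\<integral>\<^sup>+x. ennreal (c0 + c1 * f x + c2 * g x) \<partial>P)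
      = (\<integral>\<^sup>+x. ennreal c0 + ennreal c1 * ennreal (f x) + ennreal c2 * ennreal (g x) \<partial>P)"
    using f0 g0 c by (intro nn_integral_cong) (simp add: ennreal_plus ennreal_mult)
  also have "\<dots> = (\<integral>\<^sup>+x. ennreal c0 \<partial>P) + (\<integral>\<^sup>+x. ennreal c1 * ennreal (f x) \<partial>P)
      + (\<integral>\<^sup>+x. ennreal c2 * ennreal (g x) \<partial>P)"
    by (simp add: nn_integral_add)
  also have "\<dots> = ennreal c0 + ennreal c1 * ennreal a + ennreal c2 * ennreal b"
    by (simp add: nn_integral_cmult fa gb measure_pmf.emeasure_space_1)
  also have "\<dots> = ennreal (c0 + c1*a + c2*b)"
    using c ab by (simp add: ennreal_plus ennreal_mult)
  finally show ?thesis .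
qed

lemma iid_moments:
  fixes X :: "nat pmf"
  assumes m1: "(\<integral>\<^sup>+x. ennreal (real x) \<partial>X) = ennreal m1" and m2: "(\<integral>\<^sup>+x. ennreal (real x ^ 2) \<partial>X) = ennreal m2"
    and pos: "0 \<le> m1" "0 \<le> m2"
  shows "(\<integral>\<^sup>+y. ennreal (real y) \<partial>iid_sum n X) = ennreal (real n * m1)
     \<and> (\<integral>\<^sup>+y. ennreal (real y ^ 2) \<partial>iid_sum n X) = ennreal (real n * m2 + (real n ^ 2 - real n) * m1^2)"
proof (induction n)
  case 0
  then show ?case by simp
next
  case (Suc n)
  have A: "(\<integral>\<^sup>+x. ennreal (real s + 1 * real x + 0 * real x ^ 2) \<partial>X) = ennreal (real s + 1 * m1 + 0 * m2)" for s :: nat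
    by (rule nn_lin[OF _ _ m1 m2]) (use pos in auto)
  have B: "(\<integral>\<^sup>+x. ennreal (real s ^ 2 + (2 * real s) * real x + 1 * real x ^ 2) \<partial>X) = ennreal (real s ^ 2 + (2 * real s) * m1 + 1 * m2)" for s :: nat
    by (rule nn_lin[OF _ _ m1 m2]) (use pos in auto)
  have e1: "(\<integral>\<^sup>+y. ennreal (real y) \<partial>iid_sum (Suc n) X) = (\<integral>\<^sup>+s. ennreal (m1 + 1 * real s + 0 * real s ^ 2) \<partial>iid_sum n X)"
    using A by (simp add: add.commute)
  have e2: "(\<integral>\<^sup>+y. ennreal (real y ^ 2) \<partial>iid_sum (Suc n) X) = (\<integral>\<^sup>+s. ennreal (m2 + (2*m1) * real s + 1 * real s ^ 2) \<partial>iid_sum n X)"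
  proof -
    have "(\<integral>\<^sup>+y. ennreal (real y ^ 2) \<partial>iid_sum (Suc n) X) = (\<integral>\<^sup>+s. \<integral>\<^sup>+x. ennreal (real s ^ 2 + (2 * real s) * real x + 1 * real x ^ 2) \<partial>X \<partial>iid_sum n X)"
      by (simp add: power2_sum algebra_simps)
    also have "\<dots> = (\<integral>\<^sup>+s. ennreal (m2 + (2*m1) * real s + 1 * real s ^ 2) \<partial>iid_sum n X)"
      by (simp only: B) (simp add: algebra_simps)
    finally show ?thesis .
  qed
  have nn: "0 \<le> real n * m2 + (real n ^ 2 - real n) * m1^2"
  proof -
    have "real n \<le> real n ^ 2" by (cases n) (auto simp: power2_eq_square)
    then show ?thesis using pos by simp
  qed
  have r1: "(\<integral>\<^sup>+s. ennreal (m1 + 1 * real s + 0 * real s ^ 2) \<partial>iid_sum n X) = ennreal (m1 + 1 * (real n * m1) + 0 * (real n * m2 + (real n ^ 2 - real n) * m1^2))"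
    by (rule nn_lin) (use Suc pos nn in auto)
  have r2: "(\<integral>\<^sup>+s. ennreal (m2 + (2*m1) * real s + 1 * real s ^ 2) \<partial>iid_sum n X) = ennreal (m2 + (2*m1) * (real n * m1) + 1 * (real n * m2 + (real n ^ 2 - real n) * m1^2))"
    by (rule nn_lin) (use Suc pos nn in auto)
  show ?case using e1 e2 r1 r2 by (simp add: algebra_simps power2_eq_square)
qed



lemma nn_pmf_sums:
  fixes P :: "nat pmf" and f :: "nat \<Rightarrow> real"
  assumes "\<And>n. 0 \<le> f n" "(\<lambda>n. pmf P n * f n) sums s"
  shows "(\<integral>\<^sup>+n. ennreal (f n) \<partial>P) = ennreal s"
proof -
  have "(\<integral>\<^sup>+n. ennreal (f n) \<partial>P) = (\<Sum>n. ennreal (pmf P n * f n))"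
    by (simp add: nn_integral_measure_pmf nn_integral_count_space_nat ennreal_mult assms(1))
  also have "\<dots> = ennreal s"
    by (rule suminf_ennreal_eq) (use assms in auto)
  finally show ?thesis .
qed

lemma exp_sums_real: "(\<lambda>k. l ^ k / fact k) sums exp (l::real)"
  using exp_converges[of l] by (simp add: divide_inverse mult.commute)

lemma poisson_moments:
  assumes l: "0 \<le> l"
  shows "(\<integral>\<^sup>+n. ennreal (real n) \<partial>poisson0 l) = ennreal l
    \<and> (\<integral>\<^sup>+n. ennreal (real n * (real n - 1)) \<partial>poisson0 l) = ennreal (l ^ 2)"
proof (cases "l = 0")
  case True
  then show ?thesis by (simp add: poisson0_def)
next
  case False
  with l have lp: "0 < l" by simp
  have pm: "pmf (poisson0 l) n = l ^ n / fact n * exp (-l)" for n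
    using lp by (simp add: poisson0_def)
  define g where "g n = l ^ n / fact n * exp (-l) * real n" for n
  have gS: "g (Suc k) = l * exp (-l) * (l ^ k / fact k)" for k
  proof -
    have "(fact (Suc k) :: real) = real (Suc k) * fact k" by (simp only: fact_Suc of_nat_mult)
    moreover have "real (Suc k) > 0" "(fact k :: real) > 0" by auto
    ultimately show ?thesis unfolding g_def by (simp add: field_simps del: of_nat_Suc)
  qed
  have "(\<lambda>k. g (Suc k)) sums (l * exp (-l) * exp l)"
    unfolding gS by (intro sums_mult exp_sums_real)
  then have "g sums (l * exp (-l) * exp l + g 0)" by (simp add: sums_Suc_iff)
  then have gs: "g sums l" by (simp add: g_def exp_minus field_simps)
  define h where "h n = l ^ n / fact n * exp (-l) * (real n * (real n - 1))" for n
  have hS: "h (Suc (Suc k)) = l^2 * exp (-l) * (l ^ k / fact k)" for k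
  proof -
    have "(fact (Suc (Suc k)) :: real) = real (Suc (Suc k)) * (real (Suc k) * fact k)" by (simp only: fact_Suc of_nat_mult)
    moreover have "real (Suc k) > 0" "(fact k :: real) > 0" "real (Suc (Suc k)) > 0" by auto
    moreover have "real (Suc (Suc k)) - 1 = real (Suc k)" by simp
    ultimately show ?thesis unfolding h_def by (simp add: field_simps power2_eq_square del: of_nat_Suc) (simp add: algebra_simps)
  qed
  have "(\<lambda>k. h (Suc (Suc k))) sums (l^2 * exp (-l) * exp l)"
    unfolding hS by (intro sums_mult exp_sums_real)
  then have "(\<lambda>k. h (Suc k)) sums (l^2 * exp (-l) * exp l + h (Suc 0))" by (rule iffD1[OF sums_Suc_iff[of "\<lambda>k. h (Suc k)"]])
  then have "h sums (l^2 * exp (-l) * exp l + h (Suc 0) + h 0)" by (rule iffD1[OF sums_Suc_iff[of h]])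
  then have hs: "h sums (l^2)" by (simp add: h_def exp_minus field_simps)
  have nn: "0 \<le> real n * (real n - 1)" for n :: nat by (cases n) auto
  show ?thesis
    using nn_pmf_sums[of "\<lambda>n. real n" "poisson0 l" l] nn_pmf_sums[of "\<lambda>n. real n * (real n - 1)" "poisson0 l" "l^2"]
      gs hs nn unfolding g_def h_def pm by auto
qed



lemma Y_moments:
  fixes Xt :: "nat pmf"
  assumes m1: "(\<integral>\<^sup>+x. ennreal (real x) \<partial>Xt) = ennreal m1" and m2: "(\<integral>\<^sup>+x. ennreal (real x ^ 2) \<partial>Xt) = ennreal m2"
    and pos: "0 \<le> m1" "0 \<le> m2" and l: "0 \<le> cum_int psi t"
  shows "(\<integral>\<^sup>+y. ennreal (real y) \<partial>Y_law psi Xt t) = ennreal (cum_int psi t * m1)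
    \<and> (\<integral>\<^sup>+y. ennreal (real y ^ 2) \<partial>Y_law psi Xt t) = ennreal (cum_int psi t * m2 + (cum_int psi t)^2 * m1^2)"
proof -
  define l where "l = cum_int psi t"
  note im = iid_moments[OF m1 m2 pos]
  note pmom = poisson_moments[OF l[folded l_def]]
  have nn: "0 \<le> real n * (real n - 1)" for n :: nat by (cases n) auto
  have "(\<integral>\<^sup>+y. ennreal (real y) \<partial>Y_law psi Xt t) = (\<integral>\<^sup>+n. \<integral>\<^sup>+y. ennreal (real y) \<partial>iid_sum n Xt \<partial>poisson0 l)"
    by (simp add: Y_law_def l_def)
  also have "\<dots> = (\<integral>\<^sup>+n. ennreal (0 + m1 * real n + 0 * (real n * (real n - 1))) \<partial>poisson0 l)"
    by (intro nn_integral_cong) (simp add: im mult.commute)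
  also have "\<dots> = ennreal (0 + m1 * l + 0 * l^2)"
    by (rule nn_lin) (use pmom pos nn l l_def in auto)
  finally have 1: "(\<integral>\<^sup>+y. ennreal (real y) \<partial>Y_law psi Xt t) = ennreal (l * m1)" by (simp add: mult.commute)
  have "(\<integral>\<^sup>+y. ennreal (real y ^ 2) \<partial>Y_law psi Xt t) = (\<integral>\<^sup>+n. \<integral>\<^sup>+y. ennreal (real y ^ 2) \<partial>iid_sum n Xt \<partial>poisson0 l)"
    by (simp add: Y_law_def l_def)
  also have "\<dots> = (\<integral>\<^sup>+n. ennreal (0 + m2 * real n + m1^2 * (real n * (real n - 1))) \<partial>poisson0 l)"
    by (intro nn_integral_cong) (subst im[THEN conjunct2], simp add: algebra_simps power2_eq_square)
  also have "\<dots> = ennreal (0 + m2 * l + m1^2 * l^2)"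
    by (rule nn_lin) (use pmom pos nn l l_def in auto)
  finally have 2: "(\<integral>\<^sup>+y. ennreal (real y ^ 2) \<partial>Y_law psi Xt t) = ennreal (l * m2 + l^2 * m1^2)" by (simp add: mult.commute)
  show ?thesis using 1 2 l_def by simp
qed

definition pp :: "nat \<Rightarrow> real \<Rightarrow> real" where
  "pp n l = (if 0 < l then l ^ n / fact n * exp (-l) else (if n = 0 then 1 else 0))"

lemma pmf_poisson0: "pmf (poisson0 l) n = pp n l"
  by (simp add: poisson0_def pp_def)

lemma pp_meas[measurable]: "pp n \<in> borel_measurable borel"
  unfolding pp_def by measurable

lemma kernel_meas:
  assumes Lm: "cum_int psi \<in> borel_measurable M"
  shows "(\<lambda>a. measure_pmf (Y_law psi Xt a)) \<in> measurable M (subprob_algebra (count_space UNIV))"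
proof (rule measurable_subprob_algebra)
  fix a show "subprob_space (measure_pmf (Y_law psi Xt a))" by (rule subprob_space_measure_pmf)
next
  fix a show "sets (measure_pmf (Y_law psi Xt a)) = sets (count_space UNIV)" by simp
next
  fix X :: "nat set"
  have e: "emeasure (measure_pmf (Y_law psi Xt a)) X = (\<Sum>n. ennreal (pp n (cum_int psi a)) * emeasure (measure_pmf (iid_sum n Xt)) X)" for a
    by (simp add: Y_law_def nn_integral_measure_pmf nn_integral_count_space_nat pmf_poisson0)
  have [measurable]: "cum_int psi \<in> borel_measurable M" by (rule Lm)
  show "(\<lambda>a. emeasure (measure_pmf (Y_law psi Xt a)) X) \<in> borel_measurable M"
    unfolding e by measurable
qed



theorem mainTheorem6:
  fixes psi :: "real \<Rightarrow> real" and Xt :: "nat pmf" and fA :: "real \<Rightarrow> real"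
  assumes psi_nonneg: "\<And>t. 0 \<le> psi t"
    and psi_int: "\<And>t. 0 \<le> t \<Longrightarrow> set_integrable lborel {0..t} psi"
    and fA_nonneg: "\<And>a. 0 \<le> fA a"
    and fA_meas: "fA \<in> borel_measurable borel"
    and fA_prob: "(\<integral>\<^sup>+ a\<in>{0..}. ennreal (fA a) \<partial>lborel) = 1"
    and X_int2: "integrable (measure_pmf Xt) (\<lambda>x. real x ^ 2)"
    and X_pos: "measure_pmf.expectation Xt real > 0"
    and Y_int2: "integrable (Ytilde_law psi Xt fA) (\<lambda>y. real y ^ 2)"
    and Y_pos: "(\<integral>y. real y \<partial>Ytilde_law psi Xt fA) > 0"
  shows "(\<integral>y. real y ^ 2 \<partial>Ytilde_law psi Xt fA) / (\<integral>y. real y \<partial>Ytilde_law psi Xt fA)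
           \<ge> (\<integral>y. real y \<partial>Ytilde_law psi Xt fA)
             + measure_pmf.expectation Xt (\<lambda>x. real x ^ 2) / measure_pmf.expectation Xt real"
proof -
  define L where "L = cum_int psi"
  define m1 where "m1 = measure_pmf.expectation Xt real"
  define m2 where "m2 = measure_pmf.expectation Xt (\<lambda>x. real x ^ 2)"
  define A where "A = age_law fA"
  define Y where "Y = Ytilde_law psi Xt fA"
  have Lnn: "0 \<le> L t" for t
    unfolding L_def cum_int_def set_lebesgue_integral_def
    by (intro integral_nonneg_AE AE_I2) (auto simp: psi_nonneg indicator_def)
  have Lmono: "mono L"
  proof (rule monoI)
    fix s t :: real assume st: "s \<le> t"
    show "L s \<le> L t"
    proof (cases "s < 0")
      case True
      then have "{0..s} = {}" by auto
      then have "L s = 0" by (simp add: L_def cum_int_def set_lebesgue_integral_def)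
      then show ?thesis using Lnn by simp
    next
      case False
      then have "0 \<le> s" "0 \<le> t" using st by auto
      then show ?thesis
        unfolding L_def cum_int_def set_lebesgue_integral_def
        using psi_int[of s] psi_int[of t] st psi_nonneg
        by (intro integral_mono) (auto simp: set_integrable_def indicator_def)
    qed
  qed
  have Lmeas: "L \<in> borel_measurable borel" using Lmono by (rule borel_measurable_mono)
  have sA: "sets A = sets borel" by (simp add: A_def age_law_def)
  have spA: "space A = UNIV" by (simp add: A_def age_law_def)
  have LmA[measurable]: "L \<in> borel_measurable A" using Lmeas by (simp add: measurable_cong_sets[OF sA refl])
  have "emeasure A (space A) = (\<integral>\<^sup>+ a. ennreal (fA a) * indicator {0..} a \<partial>lborel)"
    unfolding spA A_def age_law_def using fA_meas
    by (subst emeasure_density) auto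
  also have "\<dots> = 1" using fA_prob by (simp add: mult.commute)
  finally have "emeasure A (space A) = 1" .
  then interpret A: prob_space A by (rule prob_spaceI)
  have K: "(\<lambda>a. measure_pmf (Y_law psi Xt a)) \<in> measurable A (subprob_algebra (count_space UNIV))"
    by (rule kernel_meas) (use LmA L_def in simp)
  have Ydef: "Y = A \<bind> (\<lambda>a. measure_pmf (Y_law psi Xt a))" by (simp add: Y_def A_def Ytilde_law_def)
  have sY: "sets Y = sets (count_space UNIV)" unfolding Ydef
    by (subst sets_bind) (auto simp: spA)
  have Ymeas: "f \<in> borel_measurable Y" for f :: "nat \<Rightarrow> real"
    by (simp add: measurable_cong_sets[OF sY refl])
  have Yint: "(\<integral>\<^sup>+y. f y \<partial>Y) = (\<integral>\<^sup>+a. \<integral>\<^sup>+y. f y \<partial>Y_law psi Xt a \<partial>A)" for f :: "nat \<Rightarrow> ennreal"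
    unfolding Ydef by (rule nn_integral_bind[OF _ K]) simp
  have Xi1: "integrable (measure_pmf Xt) (\<lambda>x. real x)"
  proof (rule Bochner_Integration.integrable_bound[OF X_int2])
    have "real x \<le> real x ^ 2" for x :: nat by (cases x) (auto simp: power2_eq_square)
    then show "AE x in measure_pmf Xt. norm (real x) \<le> norm (real x ^ 2)" by (intro AE_I2) simp
  qed simp
  have m1e: "(\<integral>\<^sup>+x. ennreal (real x) \<partial>Xt) = ennreal m1"
    unfolding m1_def by (rule nn_integral_eq_integral[OF Xi1]) auto
  have m2e: "(\<integral>\<^sup>+x. ennreal (real x ^ 2) \<partial>Xt) = ennreal m2"
    unfolding m2_def by (rule nn_integral_eq_integral[OF X_int2]) auto
  have m1p: "0 < m1" using X_pos m1_def by simp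
  have m2nn: "0 \<le> m2" unfolding m2_def by (intro integral_nonneg_AE AE_I2) auto
  note YM = Y_moments[OF m1e m2e less_imp_le[OF m1p] m2nn]
  have E1: "(\<integral>\<^sup>+y. ennreal (real y) \<partial>Y) = (\<integral>\<^sup>+a. ennreal (L a * m1) \<partial>A)"
    unfolding Yint by (intro nn_integral_cong) (use YM Lnn L_def in auto)
  have E2: "(\<integral>\<^sup>+y. ennreal (real y ^ 2) \<partial>Y) = (\<integral>\<^sup>+a. ennreal (L a * m2 + (L a)^2 * m1^2) \<partial>A)"
    unfolding Yint by (intro nn_integral_cong) (use YM Lnn L_def in auto)
  have E2fin: "(\<integral>\<^sup>+y. ennreal (real y ^ 2) \<partial>Y) < \<infinity>"
    using nn_integral_eq_integral[OF Y_int2[folded Y_def]] by simp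
  have "ennreal (m1^2) * (\<integral>\<^sup>+a. ennreal ((L a)^2) \<partial>A) = (\<integral>\<^sup>+a. ennreal (m1^2) * ennreal ((L a)^2) \<partial>A)"
    by (rule nn_integral_cmult[symmetric]) simp
  also have "\<dots> \<le> (\<integral>\<^sup>+a. ennreal (L a * m2 + (L a)^2 * m1^2) \<partial>A)"
    by (intro nn_integral_mono) (use Lnn m2nn in \<open>auto simp: ennreal_mult[symmetric] mult.commute\<close>)
  finally have "ennreal (m1^2) * (\<integral>\<^sup>+a. ennreal ((L a)^2) \<partial>A) < \<infinity>"
    using E2 E2fin by simp
  then have L2fin: "(\<integral>\<^sup>+a. ennreal ((L a)^2) \<partial>A) < \<infinity>"
    using m1p by (auto simp: ennreal_mult_less_top)
  have iL2: "integrable A (\<lambda>a. (L a)^2)"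
    by (rule integrableI_nonneg) (use L2fin in auto)
  have Lb: "L a \<le> 1 + (L a)^2" for a
  proof (cases "L a \<le> 1")
    case True then show ?thesis by (simp add: add_increasing2)
  next
    case False
    then have "L a * 1 \<le> L a * L a" by (intro mult_left_mono) auto
    then show ?thesis by (simp add: power2_eq_square)
  qed
  have iL: "integrable A L"
    by (rule Bochner_Integration.integrable_bound[of _ "\<lambda>a. 1 + (L a)^2"])
       (use iL2 Lnn Lb in \<open>auto intro!: AE_I2\<close>)
  define EL where "EL = A.expectation L"
  define EL2 where "EL2 = A.expectation (\<lambda>a. (L a)^2)"
  have "(\<integral>\<^sup>+a. ennreal (L a * m1) \<partial>A) = ennreal (\<integral>a. L a * m1 \<partial>A)"
    by (rule nn_integral_eq_integral) (use iL Lnn m1p in auto)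
  then have Y1: "(\<integral>y. real y \<partial>Y) = EL * m1"
    using E1 Lnn m1p by (simp add: integral_eq_nn_integral[OF Ymeas] EL_def integral_nonneg)
  have "(\<integral>\<^sup>+a. ennreal (L a * m2 + (L a)^2 * m1^2) \<partial>A) = ennreal (\<integral>a. L a * m2 + (L a)^2 * m1^2 \<partial>A)"
    by (rule nn_integral_eq_integral) (use iL iL2 Lnn m2nn in auto)
  moreover have "(\<integral>a. L a * m2 + (L a)^2 * m1^2 \<partial>A) = EL * m2 + EL2 * m1^2"
    using iL iL2 by (simp add: EL_def EL2_def)
  ultimately have E2': "(\<integral>\<^sup>+y. ennreal (real y ^ 2) \<partial>Y) = ennreal (EL * m2 + EL2 * m1^2)"
    using E2 by simp
  have ELnn: "0 \<le> EL" "0 \<le> EL2" unfolding EL_def EL2_def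
    by (auto intro!: integral_nonneg_AE AE_I2 simp: Lnn)
  have Y2: "(\<integral>y. real y ^ 2 \<partial>Y) = EL * m2 + EL2 * m1^2"
  proof -
    have "(\<integral>y. real y ^ 2 \<partial>Y) = enn2real (\<integral>\<^sup>+y. ennreal (real y ^ 2) \<partial>Y)"
      by (rule integral_eq_nn_integral[OF Ymeas]) simp
    also have "\<dots> = enn2real (ennreal (EL * m2 + EL2 * m1^2))" by (simp only: E2')
    also have "\<dots> = EL * m2 + EL2 * m1^2" using ELnn m2nn by (intro enn2real_ennreal) simp
    finally show ?thesis .
  qed
  have var: "EL^2 \<le> EL2"
    using A.variance_eq[OF iL iL2] A.variance_positive[of L] by (simp add: EL_def EL2_def)
  have ELp: "0 < EL" using Y1 Y_pos[folded Y_def] m1p by (simp add: zero_less_mult_iff)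
  have key: "EL * m1 + m2 / m1 \<le> (EL * m2 + EL2 * m1^2) / (EL * m1)"
  proof -
    have "(EL * m1 + m2 / m1) * (EL * m1) = EL^2 * m1^2 + EL * m2"
      using m1p by (simp add: field_simps power2_eq_square)
    also have "\<dots> \<le> EL * m2 + EL2 * m1^2"
      using var m1p by (simp add: mult_right_mono)
    finally show ?thesis using ELp m1p by (simp add: pos_le_divide_eq)
  qed
  show ?thesis using key Y1 Y2 by (simp add: Y_def m1_def m2_def)
qed


end
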